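(* Let $R$ be a commutative ring with unit, let $b\in R$, and let $\mathbf B=\begin{pmatrix}1&1&-1\\0&b&0\\0&0&b\end{pmatrix}$. (1) $\mathbf B$ is partition regular over $R$ if and only if $\mathrm{ann}(b)=\{x\in R: xb=0\}$ is infinite. (2) $\mathbf B$ satisfies the generalised columns condition over $R$ if and only if there exists $d\in R$ with $db=0$ and $d^nR$ infinite for all $n\ge0$.
   Context: $\mathbf{B}$ is partition regular over $R$ if for every $r\ge1$ and every map $\chi\colon R\to\{1,\dots,r\}$ there is a nonzero $\mathbf{x}=(x_1,x_2,x_3)^{\intercal}\in R^3$ with $\mathbf{B}\mathbf{x}=0$ and $\chi(x_1)=\chi(x_2)=\chi(x_3)$. Generalised columns condition for a $k\times l$ matrix over $R$ with columns $\mathbf c_1,\dots,\mathbf c_l$: there exist $m\ge0$, a partition $\{1,\dots,l\}=I_0\cup\dots\cup I_m$ and $d_0,\dots,d_m\in R\setminus\{0\}$ with (i) $d_0\sum_{i\in I_0}\mathbf c_i=0$; (ii) for $1\le t\le m$, $d_t\sum_{i\in I_t}\mathbf c_i$ lies in the $R$-submodule generated by the $\mathbf c_j$ with $j\in I_0\cup\dots\cup I_{t-1}$; (iii) if $m>0$, the ideal $d_0(d_1\cdots d_m)^nR$ is infinite for every $n\ge0$. *)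

theory Defs
  imports Main
begin

text \<open>A k x l matrix over a commutative ring R (the type 'a) is represented as a
function A :: nat => nat => 'a, with entry A i j for row i < k and column j < l.
Vectors in R^l are functions nat => 'a, only the components < l being relevant.\<close>

definition partition_regular :: "nat \<Rightarrow> nat \<Rightarrow> (nat \<Rightarrow> nat \<Rightarrow> 'a::comm_ring_1) \<Rightarrow> bool" where
  "partition_regular k l A \<longleftrightarrow>
     (\<forall>r::nat. r \<ge> 1 \<longrightarrow> (\<forall>\<chi> :: 'a \<Rightarrow> nat. (\<forall>x. \<chi> x \<in> {1..r}) \<longrightarrow>
        (\<exists>x :: nat \<Rightarrow> 'a. (\<exists>i<l. x i \<noteq> 0) \<and>
            (\<forall>row<k. (\<Sum>j<l. A row j * x j) = 0) \<and>
            (\<forall>i<l. \<forall>j<l. \<chi> (x i) = \<chi> (x j)))))"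

definition in_column_span :: "nat \<Rightarrow> (nat \<Rightarrow> nat \<Rightarrow> 'a::comm_ring_1) \<Rightarrow> nat set \<Rightarrow> (nat \<Rightarrow> 'a) \<Rightarrow> bool" where
  "in_column_span k A J v \<longleftrightarrow>
     (\<exists>a :: nat \<Rightarrow> 'a. \<forall>row<k. v row = (\<Sum>j\<in>J. a j * A row j))"

definition generalised_columns_condition :: "nat \<Rightarrow> nat \<Rightarrow> (nat \<Rightarrow> nat \<Rightarrow> 'a::comm_ring_1) \<Rightarrow> bool" where
  "generalised_columns_condition k l A \<longleftrightarrow>
     (\<exists>(m::nat) (I :: nat \<Rightarrow> nat set) (d :: nat \<Rightarrow> 'a).
        (\<Union>t\<le>m. I t) = {..<l} \<and>
        (\<forall>t\<le>m. I t \<noteq> {}) \<and>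
        (\<forall>s\<le>m. \<forall>t\<le>m. s \<noteq> t \<longrightarrow> I s \<inter> I t = {}) \<and>
        (\<forall>t\<le>m. d t \<noteq> 0) \<and>
        (\<forall>row<k. d 0 * (\<Sum>i\<in>I 0. A row i) = 0) \<and>
        (\<forall>t\<in>{1..m}. in_column_span k A (\<Union>s<t. I s) (\<lambda>row. d t * (\<Sum>i\<in>I t. A row i))) \<and>
        (m > 0 \<longrightarrow> (\<forall>n::nat. infinite (range (\<lambda>r. d 0 * (\<Prod>t\<in>{1..m}. d t) ^ n * r)))))"

definition matB :: "'a::comm_ring_1 \<Rightarrow> nat \<Rightarrow> nat \<Rightarrow> 'a" where
  "matB b i j = (if i = 0 then (if j = 0 then 1 else if j = 1 then 1 else if j = 2 then -1 else 0)
                 else if i = j then b else 0)"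

end

theory Submission
  imports Defs "HOL-Library.Ramsey"
begin

lemma sum3: "(\<Sum>j<(3::nat). f j) = f 0 + f 1 + (f 2 :: 'a::comm_monoid_add)"
  by (simp add: eval_nat_numeral add.assoc)

lemma matB_rows:
  "(\<Sum>j<(3::nat). matB b 0 j * x j) = x 0 + x 1 - x 2"
  "(\<Sum>j<(3::nat). matB b 1 j * x j) = b * x 1"
  "(\<Sum>j<(3::nat). matB b 2 j * x j) = b * x 2"
  by (simp_all add: sum3 matB_def)

lemma part1_fwd:
  fixes b :: "'a::comm_ring_1"
  assumes fin: "finite {x::'a. x * b = 0}"
  shows "\<not> partition_regular 3 3 (matB b)"
proof
  let ?A = "{x::'a. x * b = 0}"
  obtain f and n :: nat where fA: "f ` ?A = {i. i < n}" and inj: "inj_on f ?A"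
    using finite_imp_inj_to_nat_seg[OF fin] by blast
  have fl: "\<And>y. y * b = 0 \<Longrightarrow> f y < n" using fA by blast
  define \<chi> where "\<chi> x = (if x \<in> ?A then f x + 1 else 1)" for x
  assume "partition_regular 3 3 (matB b)"
  then have "\<exists>x :: nat \<Rightarrow> 'a. (\<exists>i<3. x i \<noteq> 0) \<and>
            (\<forall>row<3. (\<Sum>j<3. matB b row j * x j) = 0) \<and>
            (\<forall>i<3. \<forall>j<3. \<chi> (x i) = \<chi> (x j))"
    unfolding partition_regular_def
    apply (elim allE[of _ "n+1"])
    apply (elim impE, simp)
    apply (elim allE[of _ \<chi>])
    apply (elim impE)
    using fl by (auto simp: \<chi>_def less_imp_le)
  then obtain x :: "nat \<Rightarrow> 'a" where nz: "\<exists>i<3. x i \<noteq> 0"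
    and eq: "\<forall>row<3. (\<Sum>j<3. matB b row j * x j) = 0"
    and col: "\<forall>i<3. \<forall>j<3. \<chi> (x i) = \<chi> (x j)" by blast
  have l: "(0::nat) < 3" "(1::nat) < 3" "(2::nat) < 3" by simp_all
  have h0: "(\<Sum>j<3. matB b 0 j * x j) = 0" using eq l(1) by blast
  have h1: "(\<Sum>j<3. matB b 1 j * x j) = 0" using eq l(2) by blast
  have h2: "(\<Sum>j<3. matB b 2 j * x j) = 0" using eq l(3) by blast
  have e0: "x 0 + x 1 - x 2 = 0" and e1: "b * x 1 = 0" and e2: "b * x 2 = 0"
    using h0 h1 h2 by (simp_all only: matB_rows)
  have x1: "x 1 \<in> ?A" and x2: "x 2 \<in> ?A" using e1 e2 by (simp_all add: mult.commute)
  have xeq: "x 0 = x 2 - x 1" using e0 by (simp add: algebra_simps)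
  have "x 0 * b = x 2 * b - x 1 * b" using xeq by (simp add: left_diff_distrib)
  then have x0: "x 0 \<in> ?A" using x1 x2 by simp
  have c01: "\<chi> (x 0) = \<chi> (x 1)" and c02: "\<chi> (x 0) = \<chi> (x 2)" using col by auto
  have "f (x 0) = f (x 1)" "f (x 0) = f (x 2)" using c01 c02 x0 x1 x2 by (auto simp: \<chi>_def)
  then have "x 0 = x 1" "x 0 = x 2" using inj x0 x1 x2 by (metis inj_onD)+
  then have "x 0 = 0" "x 1 = 0" "x 2 = 0" using e0 by auto
  moreover obtain i where "i < 3" "x i \<noteq> 0" using nz by blast
  moreover have "i = 0 \<or> i = 1 \<or> i = 2" using \<open>i < 3\<close> by auto
  ultimately show False by auto
qed

lemma part1_bwd:
  fixes b :: "'a::comm_ring_1"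
  assumes inf: "infinite {x::'a. x * b = 0}"
  shows "partition_regular 3 3 (matB b)"
  unfolding partition_regular_def
proof (intro allI impI)
  fix r :: nat and \<chi> :: "'a \<Rightarrow> nat"
  assume "r \<ge> 1" and chi: "\<forall>x. \<chi> x \<in> {1..r}"
  obtain a :: "nat \<Rightarrow> 'a" where ia: "inj a" and ra: "range a \<subseteq> {x. x * b = 0}"
    using infinite_countable_subset[OF inf] by blast
  define g where "g S = \<chi> (a (Max S) - a (Min S))" for S :: "nat set"
  have "\<forall>x\<in>(UNIV::nat set). \<forall>y\<in>UNIV. x \<noteq> y \<longrightarrow> g {x, y} < r + 1"
    using chi by (auto simp: g_def le_imp_less_Suc)
  then obtain Y t where Y: "infinite Y" and Yc: "\<forall>x\<in>Y. \<forall>y\<in>Y. x\<noteq>y \<longrightarrow> g {x, y} = t"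
    using Ramsey2[of "UNIV::nat set" g "r+1"] by blast
  obtain i where i: "i \<in> Y" using Y by (metis finite.emptyI ex_in_conv)
  obtain j where j: "j \<in> Y" "i < j" using Y by (meson infinite_nat_iff_unbounded)
  obtain k where k: "k \<in> Y" "j < k" using Y by (meson infinite_nat_iff_unbounded)
  have gij: "g {i,j} = \<chi> (a j - a i)" using j by (simp add: g_def max_def min_def)
  have gjk: "g {j,k} = \<chi> (a k - a j)" using k by (simp add: g_def max_def min_def)
  have gik: "g {i,k} = \<chi> (a k - a i)" using j k by (simp add: g_def max_def min_def)
  have c1: "\<chi> (a j - a i) = t" using Yc i j gij by force
  have c2: "\<chi> (a k - a j) = t" using Yc k j gjk by force
  have c3: "\<chi> (a k - a i) = t" using Yc i j k gik by force
  define x :: "nat \<Rightarrow> 'a" where "x = (\<lambda>n. if n = 0 then a j - a i else if n = 1 then a k - a j else a k - a i)"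
  have ai: "a i * b = 0" "a j * b = 0" "a k * b = 0" using ra by auto
  show "\<exists>x :: nat \<Rightarrow> 'a. (\<exists>i<3. x i \<noteq> 0) \<and>
            (\<forall>row<3. (\<Sum>j<3. matB b row j * x j) = 0) \<and>
            (\<forall>i<3. \<forall>j<3. \<chi> (x i) = \<chi> (x j))"
  proof (rule exI[of _ x], intro conjI)
    have "a j \<noteq> a i" using ia j by (metis inj_eq less_irrefl)
    then show "\<exists>i<3. x i \<noteq> 0" by (intro exI[of _ 0]) (simp add: x_def)
    show "\<forall>row<3. (\<Sum>j<3. matB b row j * x j) = 0"
    proof (intro allI impI)
      fix row :: nat assume "row < 3"
      then have "row = 0 \<or> row = 1 \<or> row = 2" by auto
      moreover have "(\<Sum>j<3. matB b 0 j * x j) = 0" unfolding matB_rows by (simp add: x_def)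
      moreover have "(\<Sum>j<3. matB b 1 j * x j) = 0" unfolding matB_rows
        using ai by (simp add: x_def algebra_simps mult.commute)
      moreover have "(\<Sum>j<3. matB b 2 j * x j) = 0" unfolding matB_rows
        using ai by (simp add: x_def algebra_simps mult.commute)
      ultimately show "(\<Sum>j<3. matB b row j * x j) = 0" by auto
    qed
    show "\<forall>i<3. \<forall>j<3. \<chi> (x i) = \<chi> (x j)"
      using c1 c2 c3 by (auto simp: x_def)
  qed
qed

lemma subsets3: "S \<subseteq> {..<3::nat} \<Longrightarrow> S = {} \<or> S = {0} \<or> S = {1} \<or> S = {2} \<or> S = {0,1} \<or> S = {0,2} \<or> S = {1,2} \<or> S = {0,1,2}"
proof -
  assume "S \<subseteq> {..<3::nat}"
  moreover have "{..<3::nat} = {0,1,2}" by auto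
  ultimately have "S \<in> Pow {0,1,2::nat}" by simp
  then show ?thesis unfolding Pow_insert Pow_empty by (simp add: insert_commute)
qed


lemma sum_matB_12: "row < 3 \<Longrightarrow> (\<Sum>i\<in>{1,2::nat}. matB b row i) = (if row = 0 then 0 else b)"
proof -
  assume "row < 3"
  then have "row = 0 \<or> row = 1 \<or> row = 2" by auto
  then show ?thesis by (auto simp: matB_def)
qed

lemma part2_bwd:
  fixes b d :: "'a::comm_ring_1"
  assumes db: "d * b = 0" and inf: "\<forall>n::nat. infinite (range (\<lambda>r. d ^ n * r))"
  shows "generalised_columns_condition 3 3 (matB b)"
proof -
  have dnz: "d \<noteq> 0"
  proof
    assume "d = 0"
    then have "range (\<lambda>r. d ^ 1 * r) = {0}" by auto
    then show False using inf by (metis finite.emptyI finite.insertI)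
  qed
  define I :: "nat \<Rightarrow> nat set" where "I = (\<lambda>t. if t = 0 then {1,2} else {0})"
  define dd :: "nat \<Rightarrow> 'a" where "dd = (\<lambda>t. d)"
  have at1: "{..(1::nat)} = {0,1}" by auto
  show ?thesis unfolding generalised_columns_condition_def
  proof (intro exI[of _ "1::nat"] exI[of _ I] exI[of _ dd] conjI)
    show "(\<Union>t\<le>1. I t) = {..<3}" unfolding at1 I_def by auto
    show "\<forall>t\<le>1. I t \<noteq> {}" unfolding I_def by auto
    show "\<forall>s\<le>1. \<forall>t\<le>1. s \<noteq> t \<longrightarrow> I s \<inter> I t = {}" unfolding I_def by auto
    show "\<forall>t\<le>1. dd t \<noteq> 0" unfolding dd_def using dnz by auto
    show "\<forall>row<3. dd 0 * (\<Sum>i\<in>I 0. matB b row i) = 0"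
      unfolding I_def dd_def using db sum_matB_12[of _ b] by simp
    show "\<forall>t\<in>{1..1}. in_column_span 3 (matB b) (\<Union>s<t. I s) (\<lambda>row. dd t * (\<Sum>i\<in>I t. matB b row i))"
    proof
      fix t assume "t \<in> {1..(1::nat)}"
      then have t: "t = 1" by auto
      have u: "(\<Union>s<t. I s) = {1,2}" unfolding t I_def by auto
      show "in_column_span 3 (matB b) (\<Union>s<t. I s) (\<lambda>row. dd t * (\<Sum>i\<in>I t. matB b row i))"
        unfolding in_column_span_def u
      proof (intro exI[of _ "\<lambda>j. if j = 1 then d else 0"] allI impI)
        fix row :: nat assume "row < 3"
        show "dd t * (\<Sum>i\<in>I t. matB b row i) = (\<Sum>j\<in>{1,2}. (if j = 1 then d else 0) * matB b row j)"
          unfolding t I_def dd_def using db by (simp add: matB_def)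
      qed
    qed
    show "1 > (0::nat) \<longrightarrow> (\<forall>n::nat. infinite (range (\<lambda>r. dd 0 * (\<Prod>t\<in>{1..1}. dd t) ^ n * r)))"
    proof (intro impI allI)
      fix n :: nat
      have eq: "(\<lambda>r. dd 0 * (\<Prod>t\<in>{1..1}. dd t) ^ n * r) = (\<lambda>r. d ^ Suc n * r)"
        unfolding dd_def by simp
      show "infinite (range (\<lambda>r. dd 0 * (\<Prod>t\<in>{1..1}. dd t) ^ n * r))" unfolding eq using inf by blast
    qed
  qed
qed


lemma gcc_struct:
  fixes b :: "'a::comm_ring_1" and m :: nat and I :: "nat \<Rightarrow> nat set" and d :: "nat \<Rightarrow> 'a"
  assumes U: "(\<Union>t\<le>m. I t) = {..<3::nat}"
    and NE: "\<forall>t\<le>m. I t \<noteq> {}"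
    and DJ: "\<forall>s\<le>m. \<forall>t\<le>m. s \<noteq> t \<longrightarrow> I s \<inter> I t = {}"
    and CS: "\<forall>t\<in>{1..m}. in_column_span 3 (matB b) (\<Union>s<t. I s) (\<lambda>row. d t * (\<Sum>i\<in>I t. matB b row i))"
    and J: "I 0 = J" "J \<union> {c} = {..<3}" "c \<notin> J"
  shows "m = 1 \<and> (\<exists>a. \<forall>row<3. d 1 * matB b row c = (\<Sum>j\<in>J. a j * matB b row j))"
proof -
  have sub: "\<And>t. t \<le> m \<Longrightarrow> I t \<subseteq> {..<3}" using U by blast
  have m0: "m \<noteq> 0"
  proof
    assume "m = 0"
    have "(\<Union>t\<le>m. I t) = I 0" using \<open>m = 0\<close> by auto
    then have "I 0 = {..<3}" using U by simp
    then show False using J by auto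
  qed
  then have "1 \<le> m" by simp
  have I1: "I 1 = {c}"
  proof -
    have "I 1 \<subseteq> {..<3}" using sub \<open>1 \<le> m\<close> by blast
    moreover have "I 1 \<inter> J = {}" using DJ \<open>1 \<le> m\<close> J(1) by (metis inf_commute le0 zero_neq_one)
    moreover have "I 1 \<noteq> {}" using NE \<open>1 \<le> m\<close> by blast
    ultimately show ?thesis using J(2) by blast
  qed
  have m1: "m = 1"
  proof (rule ccontr)
    assume "m \<noteq> 1"
    then have "2 \<le> m" using m0 by simp
    have "I 2 \<subseteq> {..<3}" using sub \<open>2 \<le> m\<close> by blast
    moreover have "I 2 \<inter> J = {}" using DJ \<open>2 \<le> m\<close> J(1) by (metis le0 zero_neq_numeral)
    moreover have "I 2 \<inter> {c} = {}" using DJ \<open>2 \<le> m\<close> \<open>1 \<le> m\<close> I1 by (metis numeral_eq_one_iff semiring_norm(85))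
    moreover have "I 2 \<noteq> {}" using NE \<open>2 \<le> m\<close> by blast
    ultimately show False using J(2) by blast
  qed
  have u0: "(\<Union>s<(1::nat). I s) = I 0" by auto
  have "in_column_span 3 (matB b) (\<Union>s<1. I s) (\<lambda>row. d 1 * (\<Sum>i\<in>I 1. matB b row i))"
    using CS m1 by simp
  moreover have "(\<Union>s<(1::nat). I s) = J" using J(1) u0 by simp
  ultimately show ?thesis using m1 I1 unfolding in_column_span_def by simp
qed

lemma sets3: "{0,1} \<union> {2} = {..<3::nat}" "{0,2} \<union> {1} = {..<3::nat}" "{1,2} \<union> {0} = {..<3::nat}"
  by auto

lemma part2_fwd:
  fixes b :: "'a::comm_ring_1"
  assumes "generalised_columns_condition 3 3 (matB b)"
  shows "\<exists>d::'a. d * b = 0 \<and> (\<forall>n::nat. infinite (range (\<lambda>r. d ^ n * r)))"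
proof -
  obtain m I d where U: "(\<Union>t\<le>(m::nat). I t) = {..<3::nat}"
    and NE: "\<forall>t\<le>m. I t \<noteq> {}"
    and DJ: "\<forall>s\<le>m. \<forall>t\<le>m. s \<noteq> t \<longrightarrow> I s \<inter> I t = {}"
    and DNZ: "\<forall>t\<le>m. d t \<noteq> (0::'a)"
    and C0: "\<forall>row<3. d 0 * (\<Sum>i\<in>I 0. matB b row i) = 0"
    and CS: "\<forall>t\<in>{1..m}. in_column_span 3 (matB b) (\<Union>s<t. I s) (\<lambda>row. d t * (\<Sum>i\<in>I t. matB b row i))"
    and INF: "m > 0 \<longrightarrow> (\<forall>n::nat. infinite (range (\<lambda>r. d 0 * (\<Prod>t\<in>{1..m}. d t) ^ n * r)))"
    using assms unfolding generalised_columns_condition_def by (elim exE conjE) (rule that; assumption)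
  have d0: "d 0 \<noteq> 0" using DNZ by simp
  have r0: "d 0 * (\<Sum>i\<in>I 0. matB b 0 i) = 0" using C0 by simp
  have "I 0 \<subseteq> {..<3}" using U by blast
  then have cases: "I 0 = {} \<or> I 0 = {0} \<or> I 0 = {1} \<or> I 0 = {2} \<or> I 0 = {0,1} \<or> I 0 = {0,2} \<or> I 0 = {1,2} \<or> I 0 = {0,1,2}"
    by (rule subsets3)
  have "\<exists>c J. I 0 = J \<and> J \<union> {c} = {..<3} \<and> c \<notin> J \<and> c < 3"
  proof -
    have "I 0 \<noteq> {}" using NE by simp
    moreover have "I 0 \<noteq> {0}"
    proof
      assume "I 0 = {0}"
      with r0 d0 show False by (simp add: matB_def)
    qed
    moreover have "I 0 \<noteq> {1}"
    proof
      assume "I 0 = {1}"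
      with r0 d0 show False by (simp add: matB_def)
    qed
    moreover have "I 0 \<noteq> {2}"
    proof
      assume "I 0 = {2}"
      with r0 d0 show False by (simp add: matB_def)
    qed
    moreover have "I 0 \<noteq> {0,1,2}"
    proof
      assume "I 0 = {0,1,2}"
      with r0 d0 show False by (simp add: matB_def)
    qed
    ultimately have "I 0 = {0,1} \<or> I 0 = {0,2} \<or> I 0 = {1,2}" using cases by argo
    then show ?thesis
    proof (elim disjE)
      assume "I 0 = {0,1}" then show ?thesis using sets3(1) by (intro exI[of _ "2"] exI[of _ "{0,1}"] conjI) (assumption | simp)+
    next
      assume "I 0 = {0,2}" then show ?thesis using sets3(2) by (intro exI[of _ "1"] exI[of _ "{0,2}"] conjI) (assumption | simp)+
    next
      assume "I 0 = {1,2}" then show ?thesis using sets3(3) by (intro exI[of _ "0"] exI[of _ "{1,2}"] conjI) (assumption | simp)+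
    qed
  qed
  then obtain c J where J: "I 0 = J" "J \<union> {c} = {..<3}" "c \<notin> J" "c < 3"
    by (elim exE conjE) (rule that; assumption)
  from gcc_struct[OF U NE DJ CS J(1-3)] obtain a where m1: "m = 1"
    and a: "\<forall>row<3. d 1 * matB b row c = (\<Sum>j\<in>J. a j * matB b row j)"
    by (elim exE conjE) (rule that; assumption)
  have Jc: "J = {..<3} - {c}" using J(2,3) by auto
  have d1b: "d 1 * b = 0"
  proof -
    have "c = 0 \<or> c = 1 \<or> c = 2" using J(4) by auto
    then show ?thesis
    proof (elim disjE)
      assume c: "c = 0"
      then have JJ: "J = {1,2}" using Jc by auto
      have e0: "d 1 = a 1 - a 2" using a[rule_format, of 0] unfolding JJ c by (simp add: matB_def)
      have e1: "0 = a 1 * b" using a[rule_format, of 1] unfolding JJ c by (simp add: matB_def)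
      have e2: "0 = a 2 * b" using a[rule_format, of 2] unfolding JJ c by (simp add: matB_def)
      show ?thesis using e0 e1 e2 by (simp add: left_diff_distrib)
    next
      assume c: "c = 1"
      then have JJ: "J = {0,2}" using Jc by auto
      show ?thesis using a[rule_format, of 1] unfolding JJ c by (simp add: matB_def)
    next
      assume c: "c = 2"
      then have JJ: "J = {0,1}" using Jc by auto
      show ?thesis using a[rule_format, of 2] unfolding JJ c by (simp add: matB_def)
    qed
  qed
  have "\<forall>n::nat. infinite (range (\<lambda>r. d 1 ^ n * r))"
  proof
    fix n :: nat
    have inf: "infinite (range (\<lambda>r. d 0 * d 1 ^ n * r))" using INF m1 by simp
    have "range (\<lambda>r. d 0 * d 1 ^ n * r) \<subseteq> range (\<lambda>r. d 1 ^ n * r)"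
    proof
      fix y assume "y \<in> range (\<lambda>r. d 0 * d 1 ^ n * r)"
      then obtain r where "y = d 0 * d 1 ^ n * r" by blast
      then have "y = d 1 ^ n * (d 0 * r)" by (simp add: algebra_simps)
      then show "y \<in> range (\<lambda>r. d 1 ^ n * r)" by blast
    qed
    then show "infinite (range (\<lambda>r. d 1 ^ n * r))" using inf finite_subset by blast
  qed
  then show ?thesis using d1b by blast
qed

theorem lemma4p2:
  fixes b :: "'a::comm_ring_1"
  shows "(partition_regular 3 3 (matB b) \<longleftrightarrow> infinite {x::'a. x * b = 0})
       \<and> (generalised_columns_condition 3 3 (matB b) \<longleftrightarrow>
            (\<exists>d::'a. d * b = 0 \<and> (\<forall>n::nat. infinite (range (\<lambda>r. d ^ n * r)))))"
  using part1_fwd[of b] part1_bwd[of b] part2_fwd[of b] part2_bwd[of _ b] by blast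

end
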